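(* Let $k\ge 0$ be an integer and let $G$ be an undirected graph of degeneracy $k$. Then $f(G)\leq \frac{k-1}{k+1}\,n(G)$ if $k$ is odd, and $f(G)\leq \frac{k}{k+2}\,n(G)$ if $k$ is even.
   Context: All graphs are finite and simple. $n(G)$ is the number of vertices and $f(G)$ is the minimum size of a feedback vertex set of $G$ (a set $F\subseteq V(G)$ with $G-F$ acyclic). An ordering $\phi$ of $V(G)$ is a $k$-elimination ordering if each vertex has at most $k$ neighbours preceding it in $\phi$; the degeneracy of $G$ is the least $k$ such that $G$ has a $k$-elimination ordering. *)

theory Defs
  imports Complex_Main
begin

definition simple_graph :: "'a set \<Rightarrow> ('a \<Rightarrow> 'a \<Rightarrow> bool) \<Rightarrow> bool" where
  "simple_graph V E \<longleftrightarrow> finite V \<and> (\<forall>u v. E u v \<longrightarrow> u \<in> V \<and> v \<in> V)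
     \<and> (\<forall>u v. E u v \<longrightarrow> E v u) \<and> (\<forall>v. \<not> E v v)"

definition is_cycle_in :: "('a \<Rightarrow> 'a \<Rightarrow> bool) \<Rightarrow> 'a set \<Rightarrow> 'a list \<Rightarrow> bool" where
  "is_cycle_in E S cs \<longleftrightarrow> length cs \<ge> 3 \<and> distinct cs \<and> set cs \<subseteq> S
     \<and> (\<forall>i < length cs. E (cs ! i) (cs ! (Suc i mod length cs)))"

definition acyclic_induced :: "('a \<Rightarrow> 'a \<Rightarrow> bool) \<Rightarrow> 'a set \<Rightarrow> bool" where
  "acyclic_induced E S \<longleftrightarrow> \<not> (\<exists>cs. is_cycle_in E S cs)"

definition is_fvs :: "'a set \<Rightarrow> ('a \<Rightarrow> 'a \<Rightarrow> bool) \<Rightarrow> 'a set \<Rightarrow> bool" where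
  "is_fvs V E F \<longleftrightarrow> F \<subseteq> V \<and> acyclic_induced E (V - F)"

definition fvs_number :: "'a set \<Rightarrow> ('a \<Rightarrow> 'a \<Rightarrow> bool) \<Rightarrow> nat" where
  "fvs_number V E = Min (card ` {F. is_fvs V E F})"

definition elim_ordering :: "'a set \<Rightarrow> ('a \<Rightarrow> 'a \<Rightarrow> bool) \<Rightarrow> nat \<Rightarrow> 'a list \<Rightarrow> bool" where
  "elim_ordering V E k xs \<longleftrightarrow> distinct xs \<and> set xs = V
     \<and> (\<forall>i < length xs. card {j. j < i \<and> E (xs ! j) (xs ! i)} \<le> k)"

definition degeneracy :: "'a set \<Rightarrow> ('a \<Rightarrow> 'a \<Rightarrow> bool) \<Rightarrow> nat" where
  "degeneracy V E = (LEAST k. \<exists>xs. elim_ordering V E k xs)"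

end

theory Submission
  imports Defs
begin

lemma colouring:
  fixes R :: "nat \<Rightarrow> nat \<Rightarrow> bool"
  assumes "\<forall>i<L. card {j. j<i \<and> R j i} \<le> k"
  shows "\<exists>c. (\<forall>i<L. c i < k div 2 + 1) \<and> (\<forall>i<L. card {j. j<i \<and> R j i \<and> c j = c i} \<le> 1)"
  using assms
proof (induction L)
  case 0 show ?case by auto
next
  case (Suc n)
  then obtain c where c1: "\<forall>i<n. c i < k div 2 + 1"
    and c2: "\<forall>i<n. card {j. j<i \<and> R j i \<and> c j = c i} \<le> 1" by auto
  define A where "A col = {j. j<n \<and> R j n \<and> c j = col}" for col
  have "\<exists>col < k div 2 + 1. card (A col) \<le> 1"
  proof (rule ccontr)
    assume "\<not> ?thesis"
    hence ge: "\<forall>col < k div 2 + 1. card (A col) \<ge> 2" by auto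
    have fin: "\<forall>col. finite (A col)" unfolding A_def by auto
    have disj: "\<forall>x\<in>{..<k div 2 + 1}. \<forall>y\<in>{..<k div 2 + 1}. x \<noteq> y \<longrightarrow> A x \<inter> A y = {}"
      unfolding A_def by auto
    have U: "(\<Union>col\<in>{..<k div 2 + 1}. A col) = {j. j<n \<and> R j n}" using c1 unfolding A_def by auto
    have "card (\<Union>col\<in>{..<k div 2 + 1}. A col) = (\<Sum>col<k div 2 + 1. card (A col))"
      by (rule card_UN_disjoint) (use fin disj in auto)
    moreover have "(\<Sum>col<k div 2 + 1. card (A col)) \<ge> (\<Sum>col<k div 2 + 1. 2)"
      by (rule sum_mono) (use ge in auto)
    moreover have "card {j. j<n \<and> R j n} \<le> k" using Suc.prems by auto
    ultimately show False using U by auto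
  qed
  then obtain col where col: "col < k div 2 + 1" "card (A col) \<le> 1" by auto
  define c' where "c' = c(n := col)"
  show ?case
  proof (intro exI[of _ c'] conjI allI impI)
    fix i assume "i < Suc n" thus "c' i < k div 2 + 1" using c1 col unfolding c'_def by auto
  next
    fix i assume i: "i < Suc n"
    show "card {j. j<i \<and> R j i \<and> c' j = c' i} \<le> 1"
    proof (cases "i = n")
      case True
      have "{j. j<i \<and> R j i \<and> c' j = c' i} = A col" unfolding A_def c'_def using True by auto
      thus ?thesis using col by simp
    next
      case False
      hence "i < n" using i by auto
      have "{j. j<i \<and> R j i \<and> c' j = c' i} = {j. j<i \<and> R j i \<and> c j = c i}"
        unfolding c'_def using \<open>i<n\<close> by auto
      thus ?thesis using c2 \<open>i<n\<close> by simp
    qed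
  qed
qed

theorem mainTheorem3:
  fixes V :: "'a set" and E :: "'a \<Rightarrow> 'a \<Rightarrow> bool" and k :: nat
  assumes "simple_graph V E"
    and "degeneracy V E = k"
  shows "(odd k \<longrightarrow> real (fvs_number V E) \<le> (real k - 1) / (real k + 1) * real (card V))
       \<and> (even k \<longrightarrow> real (fvs_number V E) \<le> real k / (real k + 2) * real (card V))"
proof -
  have fin: "finite V" using assms(1) unfolding simple_graph_def by (elim conjE)
  have sym: "\<And>u v. E u v \<Longrightarrow> E v u" using assms(1) unfolding simple_graph_def by (elim conjE) blast
  obtain ys where ys: "set ys = V" "distinct ys" using finite_distinct_list[OF fin] by auto
  have "elim_ordering V E (length ys) ys"
    unfolding elim_ordering_def
  proof (intro conjI allI impI)
    fix i assume i: "i < length ys"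
    have "card {j. j<i \<and> E (ys!j) (ys!i)} \<le> card {..<i}"
      by (rule card_mono) auto
    thus "card {j. j<i \<and> E (ys!j) (ys!i)} \<le> length ys" using i by simp
  qed (use ys in auto)
  hence "\<exists>xs. elim_ordering V E (degeneracy V E) xs" unfolding degeneracy_def
    by (intro LeastI[of "\<lambda>k. \<exists>xs. elim_ordering V E k xs" "length ys"]) blast
  hence "\<exists>xs. elim_ordering V E k xs" using assms(2) by simp
  then obtain xs where xs: "distinct xs" "set xs = V"
      "\<forall>i<length xs. card {j. j<i \<and> E (xs!j) (xs!i)} \<le> k"
    unfolding elim_ordering_def by auto
  define m where "m = k div 2 + 1"
  define L where "L = length xs"
  have "\<exists>c. (\<forall>i<L. c i < m) \<and> (\<forall>i<L. card {j. j<i \<and> E (xs!j) (xs!i) \<and> c j = c i} \<le> 1)"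
    unfolding m_def L_def by (rule colouring[of _ "\<lambda>j i. E (xs!j) (xs!i)"]) (use xs(3) in simp)
  then obtain c where c1: "\<forall>i<L. c i < m"
    and c2: "\<forall>i<L. card {j. j<i \<and> E (xs!j) (xs!i) \<and> c j = c i} \<le> 1"
    by blast
  define C where "C col = {i. i<L \<and> c i = col}" for col
  have "\<exists>col<m. L \<le> m * card (C col)"
  proof (rule ccontr)
    assume "\<not> ?thesis"
    hence lt: "\<forall>col<m. m * card (C col) < L" by auto
    have U: "{..<L} = (\<Union>col\<in>{..<m}. C col)" using c1 unfolding C_def by auto
    have "card (\<Union>col\<in>{..<m}. C col) = (\<Sum>col<m. card (C col))"
      by (rule card_UN_disjoint) (auto simp: C_def)
    hence "L = (\<Sum>col<m. card (C col))" using U by (metis card_lessThan)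
    hence "m * L = (\<Sum>col<m. m * card (C col))" by (simp add: sum_distrib_left)
    also have "\<dots> < (\<Sum>col<m. L)" by (rule sum_strict_mono) (use lt m_def in auto)
    finally show False by simp
  qed
  then obtain col where col: "col < m" "L \<le> m * card (C col)" by auto
  define S where "S = (\<lambda>i. xs!i) ` C col"
  have injL: "inj_on (\<lambda>i. xs!i) {..<L}" using xs(1) unfolding L_def
    by (auto simp: inj_on_def nth_eq_iff_index_eq)
  have injC: "inj_on (\<lambda>i. xs!i) (C col)" using injL unfolding C_def
    by (rule inj_on_subset) auto
  have cardS: "card S = card (C col)" unfolding S_def using injC card_image by blast
  have SV: "S \<subseteq> V" unfolding S_def C_def L_def using xs(2) by auto
  define p where "p = inv_into {..<L} (\<lambda>i. xs!i)"
  have p1: "\<And>i. i<L \<Longrightarrow> p (xs!i) = i" unfolding p_def using injL by (simp add: inv_into_f_f)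
  have Sp: "\<And>v. v \<in> S \<Longrightarrow> p v \<in> C col \<and> xs ! p v = v" unfolding S_def using p1 C_def by auto
  have acyc: "acyclic_induced E S"
    unfolding acyclic_induced_def
  proof
    assume "\<exists>cs. is_cycle_in E S cs"
    then obtain cs where cl: "length cs \<ge> 3" "distinct cs" "set cs \<subseteq> S"
        "\<forall>i<length cs. E (cs!i) (cs!(Suc i mod length cs))" unfolding is_cycle_in_def by auto
    define l where "l = length cs"
    have "Max (p ` set cs) \<in> p ` set cs" using cl(1) by (intro Max_in) auto
    then obtain a where a: "a < l" "p (cs!a) = Max (p ` set cs)" by (auto simp: in_set_conv_nth l_def)
    have amax: "\<And>b. b < l \<Longrightarrow> p (cs!b) \<le> p (cs!a)" using a(2) by (simp add: l_def)
    obtain b d where bd: "b < l" "d < l" "b \<noteq> a" "d \<noteq> a" "b \<noteq> d" "E (cs!b) (cs!a)" "E (cs!d) (cs!a)"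
    proof -
      define b where "b = (if a = 0 then l - 1 else a - 1)"
      define d where "d = (if a = l - 1 then 0 else a + 1)"
      have l3: "l \<ge> 3" using cl(1) l_def by simp
      have b1: "Suc b mod l = a" using a(1) l3 unfolding b_def by auto
      have d1: "Suc a mod l = d" using a(1) l3 unfolding d_def by auto
      have "b < l" "d < l" "b \<noteq> a" "d \<noteq> a" "b \<noteq> d" using a(1) l3 unfolding b_def d_def by auto
      moreover have "E (cs!b) (cs!a)" using cl(4) \<open>b < l\<close> b1 l_def by metis
      moreover have "E (cs!d) (cs!a)" using cl(4) a(1) d1 l_def sym by metis
      ultimately show ?thesis using that by blast
    qed
    have inS: "cs!a \<in> S" "cs!b \<in> S" "cs!d \<in> S" using cl(3) a(1) bd nth_mem by (auto simp: l_def)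
    have ne: "cs!b \<noteq> cs!a" "cs!d \<noteq> cs!a" "cs!b \<noteq> cs!d" using cl(2) a bd
      by (auto simp: l_def nth_eq_iff_index_eq)
    have pinj: "\<And>u v. u \<in> S \<Longrightarrow> v \<in> S \<Longrightarrow> p u = p v \<Longrightarrow> u = v" using Sp by metis
    define i where "i = p (cs!a)"
    have iL: "i < L" "c i = col" using Sp[OF inS(1)] unfolding i_def C_def by auto
    have pb: "p (cs!b) < i" using amax[OF bd(1)] pinj[OF inS(2) inS(1)] ne(1) unfolding i_def
      by fastforce
    have pd: "p (cs!d) < i" using amax[OF bd(2)] pinj[OF inS(3) inS(1)] ne(2) unfolding i_def
      by fastforce
    have sub: "{p (cs!b), p (cs!d)} \<subseteq> {j. j < i \<and> E (xs!j) (xs!i) \<and> c j = c i}"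
      using pb pd Sp[OF inS(1)] Sp[OF inS(2)] Sp[OF inS(3)] bd(6,7) iL unfolding i_def C_def by auto
    have "p (cs!b) \<noteq> p (cs!d)" using pinj[OF inS(2) inS(3)] ne(3) by blast
    hence "card {p (cs!b), p (cs!d)} = 2" by simp
    moreover have "card {p (cs!b), p (cs!d)} \<le> card {j. j < i \<and> E (xs!j) (xs!i) \<and> c j = c i}"
      by (rule card_mono[OF _ sub]) auto
    ultimately show False using c2 iL by fastforce
  qed
  have fvs: "is_fvs V E (V - S)" unfolding is_fvs_def using acyc SV
    by (simp add: Diff_Diff_Int Int_absorb1)
  have "fvs_number V E \<le> card (V - S)"
    unfolding fvs_number_def
  proof (rule Min_le)
    have "{F. is_fvs V E F} \<subseteq> Pow V" unfolding is_fvs_def by auto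
    hence "finite {F. is_fvs V E F}" using fin finite_subset by blast
    thus "finite (card ` {F. is_fvs V E F})" by simp
  qed (use fvs in auto)
  moreover have cV: "card V = L" using distinct_card[OF xs(1)] xs(2) L_def by simp
  moreover have "card (V - S) = L - card S" using card_Diff_subset[OF finite_subset[OF SV fin] SV] cV by simp
  ultimately have f1: "real (fvs_number V E) \<le> real L - real (card S)"
    using SV fin card_mono by (metis of_nat_diff of_nat_le_iff)
  define t where "t = k div 2"
  have m1: "real L \<le> (real t + 1) * real (card S)" using col(2) cardS unfolding m_def t_def
    by (metis of_nat_Suc of_nat_le_iff of_nat_mult add.commute plus_1_eq_Suc)
  have key: "real (fvs_number V E) \<le> real t / (real t + 1) * real (card V)"
  proof -
    have "real t / (real t + 1) * real L = real L - real L / (real t + 1)"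
      by (simp add: field_simps)
    moreover have "real L / (real t + 1) \<le> real (card S)" using m1
      by (simp add: divide_le_eq mult.commute)
    ultimately show ?thesis using f1 cV by simp
  qed
  show ?thesis
  proof (intro conjI impI)
    assume "odd k"
    hence "k = 2*t + 1" unfolding t_def by presburger
    hence "(real k - 1) / (real k + 1) = real t / (real t + 1)" by (simp add: field_simps)
    thus "real (fvs_number V E) \<le> (real k - 1) / (real k + 1) * real (card V)" using key by simp
  next
    assume "even k"
    hence "k = 2*t" unfolding t_def by presburger
    hence "real k / (real k + 2) = real t / (real t + 1)" by (simp add: field_simps)
    thus "real (fvs_number V E) \<le> real k / (real k + 2) * real (card V)" using key by simp
  qed
qed

end
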